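(* Let $x,y,z:(-\infty,0]\to[0,\infty)$ be absolutely continuous functions with $x+y+z>0$ everywhere, $\liminf_{s\to-\infty}y(s)=0$, and, for some $\varepsilon>0$, $$|x'|\le\varepsilon(x+y+z),\qquad y'+y\le\varepsilon(x+z),\qquad z'-z\ge-\varepsilon(x+y).$$ There exist $\varepsilon_0>0$ and $c>0$ such that if $\varepsilon\le\varepsilon_0$, then $y\le2\varepsilon(x+z)$ on $(-\infty,0]$, and moreover one of the following holds: either there exists $s_*\in(-\infty,0]$ with $z\le8\varepsilon x$ on $(-\infty,s_*]$, or $x\le c\varepsilon z$ on $(-\infty,0]$. *)

theory Defs
  imports "HOL-Analysis.Analysis"
begin

definition abs_cont_on :: "real set \<Rightarrow> (real \<Rightarrow> real) \<Rightarrow> bool" where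
  "abs_cont_on S f \<longleftrightarrow>
     (\<forall>e>0. \<exists>d>0. \<forall>(n::nat) (a::nat \<Rightarrow> real) (b::nat \<Rightarrow> real).
        (\<forall>i<n. a i \<le> b i \<and> {a i..b i} \<subseteq> S) \<and>
        (\<forall>i<n. \<forall>j<n. i \<noteq> j \<longrightarrow> b i \<le> a j \<or> b j \<le> a i) \<and>
        (\<Sum>i<n. b i - a i) < d
        \<longrightarrow> (\<Sum>i<n. \<bar>f (b i) - f (a i)\<bar>) < e)"

text \<open>Absolute continuity on the unbounded interval (-\<infinity>,0]: absolute
  continuity on every compact subinterval (local absolute continuity).\<close>
definition abs_cont_nonpos :: "(real \<Rightarrow> real) \<Rightarrow> bool" where
  "abs_cont_nonpos f \<longleftrightarrow> (\<forall>a b. a \<le> b \<and> b \<le> 0 \<longrightarrow> abs_cont_on {a..b} f)"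

end

theory Submission
  imports Defs
begin


lemma ac_cont:
  assumes "abs_cont_on {a..b} f" shows "continuous_on {a..b} f"
  unfolding continuous_on_iff
proof (intro ballI allI impI)
  fix t e assume t: "t \<in> {a..b}" and e: "(0::real) < e"
  obtain d where d: "d > 0" and H: "\<And>(n::nat) (aa::nat \<Rightarrow> real) bb.
        (\<forall>i<n. aa i \<le> bb i \<and> {aa i..bb i} \<subseteq> {a..b}) \<and>
        (\<forall>i<n. \<forall>j<n. i \<noteq> j \<longrightarrow> bb i \<le> aa j \<or> bb j \<le> aa i) \<and>
        (\<Sum>i<n. bb i - aa i) < d \<Longrightarrow> (\<Sum>i<n. \<bar>f (bb i) - f (aa i)\<bar>) < e"
    using assms[unfolded abs_cont_on_def, THEN spec, THEN mp, OF e] by blast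
  show "\<exists>d>0. \<forall>x'\<in>{a..b}. dist x' t < d \<longrightarrow> dist (f x') (f t) < e"
  proof (intro exI conjI ballI impI)
    fix s assume s: "s \<in> {a..b}" and "dist s t < d"
    then have l: "max s t - min s t < d" by (auto simp: dist_real_def)
    have "(\<Sum>i<1::nat. \<bar>f ((\<lambda>_. max s t) i) - f ((\<lambda>_. min s t) i)\<bar>) < e"
      by (rule H) (use s t l in auto)
    then show "dist (f s) (f t) < e"
      by (auto simp: dist_real_def max_def min_def abs_minus_commute split: if_splits)
  qed (use d in auto)
qed

lemma ac_comb:
  assumes f: "abs_cont_on S f" and g: "abs_cont_on S g" and A: "A \<ge> 0" and B: "B \<ge> 0"
    and le: "\<And>s t. s \<in> S \<Longrightarrow> t \<in> S \<Longrightarrow> \<bar>F t - F s\<bar> \<le> A * \<bar>f t - f s\<bar> + B * \<bar>g t - g s\<bar>"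
  shows "abs_cont_on S F"
  unfolding abs_cont_on_def
proof (intro allI impI)
  fix e :: real assume e: "e > 0"
  obtain d1 where d1: "d1 > 0" and H1: "\<And>(n::nat) (aa::nat \<Rightarrow> real) bb.
        (\<forall>i<n. aa i \<le> bb i \<and> {aa i..bb i} \<subseteq> S) \<and>
        (\<forall>i<n. \<forall>j<n. i \<noteq> j \<longrightarrow> bb i \<le> aa j \<or> bb j \<le> aa i) \<and>
        (\<Sum>i<n. bb i - aa i) < d1 \<Longrightarrow> (\<Sum>i<n. \<bar>f (bb i) - f (aa i)\<bar>) < e/(4*(A+1))"
    using f[unfolded abs_cont_on_def, THEN spec, THEN mp, of "e/(4*(A+1))"] e A by (auto simp: add_nonneg_pos)
  obtain d2 where d2: "d2 > 0" and H2: "\<And>(n::nat) (aa::nat \<Rightarrow> real) bb.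
        (\<forall>i<n. aa i \<le> bb i \<and> {aa i..bb i} \<subseteq> S) \<and>
        (\<forall>i<n. \<forall>j<n. i \<noteq> j \<longrightarrow> bb i \<le> aa j \<or> bb j \<le> aa i) \<and>
        (\<Sum>i<n. bb i - aa i) < d2 \<Longrightarrow> (\<Sum>i<n. \<bar>g (bb i) - g (aa i)\<bar>) < e/(4*(B+1))"
    using g[unfolded abs_cont_on_def, THEN spec, THEN mp, of "e/(4*(B+1))"] e B by (auto simp: add_nonneg_pos)
  show "\<exists>d>0. \<forall>(n::nat) (aa::nat \<Rightarrow> real) bb.
        (\<forall>i<n. aa i \<le> bb i \<and> {aa i..bb i} \<subseteq> S) \<and>
        (\<forall>i<n. \<forall>j<n. i \<noteq> j \<longrightarrow> bb i \<le> aa j \<or> bb j \<le> aa i) \<and>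
        (\<Sum>i<n. bb i - aa i) < d \<longrightarrow> (\<Sum>i<n. \<bar>F (bb i) - F (aa i)\<bar>) < e"
  proof (intro exI[of _ "min d1 d2"] conjI allI impI)
    show "min d1 d2 > 0" using d1 d2 by simp
    fix n :: nat and aa bb :: "nat \<Rightarrow> real"
    assume P: "(\<forall>i<n. aa i \<le> bb i \<and> {aa i..bb i} \<subseteq> S) \<and>
        (\<forall>i<n. \<forall>j<n. i \<noteq> j \<longrightarrow> bb i \<le> aa j \<or> bb j \<le> aa i) \<and>
        (\<Sum>i<n. bb i - aa i) < min d1 d2"
    have s1: "(\<Sum>i<n. \<bar>f (bb i) - f (aa i)\<bar>) < e/(4*(A+1))" by (rule H1) (use P in auto)
    have s2: "(\<Sum>i<n. \<bar>g (bb i) - g (aa i)\<bar>) < e/(4*(B+1))" by (rule H2) (use P in auto)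
    have mem: "aa i \<in> S" "bb i \<in> S" if "i < n" for i
    proof -
      have "aa i \<le> bb i" "{aa i..bb i} \<subseteq> S" using P that by auto
      then show "aa i \<in> S" "bb i \<in> S" by auto
    qed
    have "(\<Sum>i<n. \<bar>F (bb i) - F (aa i)\<bar>) \<le> (\<Sum>i<n. A * \<bar>f (bb i) - f (aa i)\<bar> + B * \<bar>g (bb i) - g (aa i)\<bar>)"
      by (rule sum_mono) (use mem le in auto)
    also have "\<dots> = A * (\<Sum>i<n. \<bar>f (bb i) - f (aa i)\<bar>) + B * (\<Sum>i<n. \<bar>g (bb i) - g (aa i)\<bar>)"
      by (simp add: sum.distrib sum_distrib_left)
    also have "\<dots> \<le> A * (e/(4*(A+1))) + B * (e/(4*(B+1)))"
      using s1 s2 A B by (intro add_mono mult_left_mono) auto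
    also have "A * (e/(4*(A+1))) \<le> e/4" using A e by (simp add: field_simps)
    also have "B * (e/(4*(B+1))) \<le> e/4" using B e by (simp add: field_simps)
    finally show "(\<Sum>i<n. \<bar>F (bb i) - F (aa i)\<bar>) < e" using e by linarith
  qed
qed

lemma ac_lipschitz:
  assumes L: "L \<ge> 0" and le: "\<And>s t. s \<in> S \<Longrightarrow> t \<in> S \<Longrightarrow> s \<le> t \<Longrightarrow> \<bar>F t - F s\<bar> \<le> L * (t - s)"
  shows "abs_cont_on S F"
  unfolding abs_cont_on_def
proof (intro allI impI)
  fix e :: real assume e: "e > 0"
  show "\<exists>d>0. \<forall>(n::nat) (aa::nat \<Rightarrow> real) bb.
        (\<forall>i<n. aa i \<le> bb i \<and> {aa i..bb i} \<subseteq> S) \<and>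
        (\<forall>i<n. \<forall>j<n. i \<noteq> j \<longrightarrow> bb i \<le> aa j \<or> bb j \<le> aa i) \<and>
        (\<Sum>i<n. bb i - aa i) < d \<longrightarrow> (\<Sum>i<n. \<bar>F (bb i) - F (aa i)\<bar>) < e"
  proof (intro exI[of _ "e/(L+1)"] conjI allI impI)
    show "e/(L+1) > 0" using e L by simp
    fix n :: nat and aa bb :: "nat \<Rightarrow> real"
    assume P: "(\<forall>i<n. aa i \<le> bb i \<and> {aa i..bb i} \<subseteq> S) \<and>
        (\<forall>i<n. \<forall>j<n. i \<noteq> j \<longrightarrow> bb i \<le> aa j \<or> bb j \<le> aa i) \<and>
        (\<Sum>i<n. bb i - aa i) < e/(L+1)"
    have "(\<Sum>i<n. \<bar>F (bb i) - F (aa i)\<bar>) \<le> (\<Sum>i<n. L * (bb i - aa i))"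
    proof (rule sum_mono)
      fix i assume "i \<in> {..<n}"
      then have "aa i \<le> bb i" "{aa i..bb i} \<subseteq> S" using P by auto
      then have "aa i \<in> S" "bb i \<in> S" "aa i \<le> bb i" by auto
      then show "\<bar>F (bb i) - F (aa i)\<bar> \<le> L * (bb i - aa i)" by (rule le)
    qed
    also have "\<dots> = L * (\<Sum>i<n. bb i - aa i)" by (simp add: sum_distrib_left)
    also have "\<dots> \<le> L * (e/(L+1))" using P L by (intro mult_left_mono) auto
    also have "\<dots> < e" using L e by (simp add: field_simps)
    finally show "(\<Sum>i<n. \<bar>F (bb i) - F (aa i)\<bar>) < e" .
  qed
qed

lemma ac_const: "abs_cont_on S (\<lambda>_. k)"
  by (rule ac_lipschitz[of 0]) auto

lemma ac_add: assumes "abs_cont_on S f" "abs_cont_on S g" shows "abs_cont_on S (\<lambda>t. f t + g t)"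
  by (rule ac_comb[OF assms, of 1 1]) auto

lemma ac_scale: assumes "abs_cont_on S f" shows "abs_cont_on S (\<lambda>t. k * f t)"
proof (rule ac_comb[OF assms assms, of "\<bar>k\<bar>" 0])
  fix s t show "\<bar>k * f t - k * f s\<bar> \<le> \<bar>k\<bar> * \<bar>f t - f s\<bar> + 0 * \<bar>f t - f s\<bar>"
    by (simp add: abs_mult[symmetric] algebra_simps)
qed auto

lemma ac_mult:
  assumes f: "abs_cont_on {a..b} f" and g: "abs_cont_on {a..b} g"
  shows "abs_cont_on {a..b} (\<lambda>t. f t * g t)"
proof -
  have "compact (f ` {a..b})" "compact (g ` {a..b})"
    using ac_cont[OF f] ac_cont[OF g] compact_continuous_image by auto
  then obtain Mf Mg where Mf: "Mf > 0" "\<And>t. t \<in> {a..b} \<Longrightarrow> \<bar>f t\<bar> \<le> Mf"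
    and Mg: "Mg > 0" "\<And>t. t \<in> {a..b} \<Longrightarrow> \<bar>g t\<bar> \<le> Mg"
    by (metis compact_imp_bounded bounded_pos image_eqI real_norm_def)
  show ?thesis
  proof (rule ac_comb[OF f g, of Mg Mf])
    fix s t assume s: "s \<in> {a..b}" and t: "t \<in> {a..b}"
    have "\<bar>f t * g t - f s * g s\<bar> = \<bar>g t * (f t - f s) + f s * (g t - g s)\<bar>" by (simp add: algebra_simps)
    also have "\<dots> \<le> \<bar>g t\<bar> * \<bar>f t - f s\<bar> + \<bar>f s\<bar> * \<bar>g t - g s\<bar>" by (metis abs_mult abs_triangle_ineq)
    also have "\<dots> \<le> Mg * \<bar>f t - f s\<bar> + Mf * \<bar>g t - g s\<bar>"
      using Mf Mg s t by (intro add_mono mult_right_mono) auto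
    finally show "\<bar>f t * g t - f s * g s\<bar> \<le> Mg * \<bar>f t - f s\<bar> + Mf * \<bar>g t - g s\<bar>" .
  qed (use Mf Mg in auto)
qed

lemma ac_exp: "abs_cont_on {a..b} (\<lambda>t. exp (k * t))"
proof (rule ac_lipschitz[of "\<bar>k\<bar> * exp (\<bar>k\<bar> * (\<bar>a\<bar> + \<bar>b\<bar>))"])
  fix s t assume s: "s \<in> {a..b}" and t: "t \<in> {a..b}" and st: "s \<le> t"
  show "\<bar>exp (k * t) - exp (k * s)\<bar> \<le> \<bar>k\<bar> * exp (\<bar>k\<bar> * (\<bar>a\<bar> + \<bar>b\<bar>)) * (t - s)"
  proof (cases "s = t")
    case False
    then have "s < t" using st by simp
    have dv: "\<forall>x. s \<le> x \<and> x \<le> t \<longrightarrow> ((\<lambda>t. exp (k * t)) has_real_derivative k * exp (k * x)) (at x)"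
      by (auto intro!: derivative_eq_intros)
    obtain r where r: "s < r" "r < t" and eq: "exp (k * t) - exp (k * s) = (t - s) * (k * exp (k * r))"
      using MVT2[of s t "\<lambda>t. exp (k * t)" "\<lambda>r. k * exp (k * r)", OF \<open>s < t\<close>] dv by blast
    have "\<bar>k * r\<bar> \<le> \<bar>k\<bar> * (\<bar>a\<bar> + \<bar>b\<bar>)" using r s t by (auto simp: abs_mult intro!: mult_left_mono)
    then have "exp (k * r) \<le> exp (\<bar>k\<bar> * (\<bar>a\<bar> + \<bar>b\<bar>))" by simp
    then have "\<bar>k * exp (k * r)\<bar> \<le> \<bar>k\<bar> * exp (\<bar>k\<bar> * (\<bar>a\<bar> + \<bar>b\<bar>))"
      by (simp add: abs_mult mult_left_mono)
    have "\<bar>exp (k * t) - exp (k * s)\<bar> = (t - s) * \<bar>k * exp (k * r)\<bar>" using eq \<open>s < t\<close> by (simp add: abs_mult)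
    also have "\<dots> \<le> (t - s) * (\<bar>k\<bar> * exp (\<bar>k\<bar> * (\<bar>a\<bar> + \<bar>b\<bar>)))"
      using \<open>\<bar>k * exp (k * r)\<bar> \<le> _\<close> \<open>s < t\<close> by (intro mult_left_mono) auto
    finally show ?thesis by (simp add: mult.commute)
  qed simp
qed simp




lemma comp_interval:
  fixes U C :: "real set"
  assumes C: "C \<in> components U" and U: "open U" "U \<subseteq> {a<..<b}"
  shows "C = {Inf C<..<Sup C}" "Inf C < Sup C" "a \<le> Inf C" "Sup C \<le> b"
proof -
  have oC: "open C" using open_components[OF U(1) C] .
  have conn: "connected C" using in_components_connected[OF C] .
  have ne: "C \<noteq> {}" using in_components_nonempty[OF C] .
  have sub: "C \<subseteq> {a<..<b}" using in_components_subset[OF C] U(2) by blast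
  have bb: "bdd_below C" "bdd_above C" using sub by (auto intro!: bdd_belowI[of _ a] bdd_aboveI[of _ b])
  have lt1: "Inf C < x" if xC: "x \<in> C" for x
  proof -
    obtain r where r: "r > 0" "ball x r \<subseteq> C" using oC xC open_contains_ball by metis
    have "x - r/2 \<in> ball x r" using r by (simp add: dist_real_def)
    then have "x - r/2 \<in> C" using r by blast
    then have "Inf C \<le> x - r/2" using bb(1) by (rule cInf_lower)
    then show ?thesis using r by linarith
  qed
  have lt2: "x < Sup C" if xC: "x \<in> C" for x
  proof -
    obtain r where r: "r > 0" "ball x r \<subseteq> C" using oC xC open_contains_ball by metis
    have "x + r/2 \<in> ball x r" using r by (simp add: dist_real_def)
    then have "x + r/2 \<in> C" using r by blast
    then have "x + r/2 \<le> Sup C" using bb(2) by (rule cSup_upper)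
    then show ?thesis using r by linarith
  qed
  have inC: "x \<in> C" if "Inf C < x" "x < Sup C" for x
  proof -
    have "\<exists>p\<in>C. p < x" using that(1) cInf_less_iff[OF ne bb(1), of x] by simp
    then obtain p where p: "p \<in> C" "p < x" by blast
    have "\<exists>q\<in>C. x < q" using that(2) less_cSup_iff[OF ne bb(2), of x] by simp
    then obtain q where q: "q \<in> C" "x < q" by blast
    have "\<forall>x\<in>C. \<forall>y\<in>C. \<forall>z. x \<le> z \<longrightarrow> z \<le> y \<longrightarrow> z \<in> C" using conn connected_iff_interval by blast
    then have "p \<le> x \<longrightarrow> x \<le> q \<longrightarrow> x \<in> C" using p q by blast
    then show ?thesis using p q by simp
  qed
  show "C = {Inf C<..<Sup C}" using lt1 lt2 inC by auto
  obtain x where x: "x \<in> C" using ne by blast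
  show "Inf C < Sup C" using lt1[OF x] lt2[OF x] by linarith
  show "a \<le> Inf C" using sub ne by (intro cInf_greatest) auto
  show "Sup C \<le> b" using sub ne by (intro cSup_least) auto
qed

lemma disj_intervals:
  fixes l1 r1 l2 r2 :: real
  assumes "{l1<..<r1} \<inter> {l2<..<r2} = {}" "l1 < r1" "l2 < r2"
  shows "r1 \<le> l2 \<or> r2 \<le> l1"
proof (rule ccontr)
  assume "\<not> ?thesis"
  then have "max l1 l2 < min r1 r2" using assms by auto
  then have "(max l1 l2 + min r1 r2)/2 \<in> {l1<..<r1} \<inter> {l2<..<r2}" by auto
  then show False using assms by blast
qed




lemma lusin_open:
  assumes ac: "abs_cont_on {a..b} f" and N: "negligible N" "N \<subseteq> {a<..<b}"
  shows "negligible (f ` N)"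
  unfolding negligible_outer_le
proof (intro allI impI)
  fix e :: real assume e: "e > 0"
  have cont: "continuous_on {a..b} f" using ac_cont[OF ac] .
  obtain d where d: "d > 0" and H: "\<forall>(n::nat) (aa::nat \<Rightarrow> real) bb.
        (\<forall>i<n. aa i \<le> bb i \<and> {aa i..bb i} \<subseteq> {a..b}) \<and>
        (\<forall>i<n. \<forall>j<n. i \<noteq> j \<longrightarrow> bb i \<le> aa j \<or> bb j \<le> aa i) \<and>
        (\<Sum>i<n. bb i - aa i) < d \<longrightarrow> (\<Sum>i<n. \<bar>f (bb i) - f (aa i)\<bar>) < e"
    using ac[unfolded abs_cont_on_def, THEN spec, THEN mp, OF e] by blast
  have Nsets: "N \<in> sets lebesgue" using N(1) negligible_iff_null_sets null_setsD2 by blast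
  obtain T0 where T0: "open T0" "N \<subseteq> T0" "(T0 - N) \<in> lmeasurable" "emeasure lebesgue (T0 - N) < ennreal d"
    by (rule sets_lebesgue_outer_open[OF Nsets d])
  define U where "U = T0 \<inter> {a<..<b}"
  have oU: "open U" using T0(1) by (simp add: U_def open_Int)
  have NU: "N \<subseteq> U" using T0(2) N(2) by (auto simp: U_def)
  have Usub: "U \<subseteq> {a<..<b}" by (auto simp: U_def)
  have Umeas: "U \<in> lmeasurable" using oU Usub by (intro lmeasurable_open) (auto intro: bounded_subset[OF bounded_Ioo Usub])
  have mT0: "measure lebesgue (T0 - N) < d"
    using T0(3,4) by (simp add: emeasure_eq_measure2 ennreal_less_iff)
  have Nmeas: "N \<in> lmeasurable" using N(1) negligible_imp_measurable by blast
  have "measure lebesgue U \<le> measure lebesgue ((T0 - N) \<union> N)"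
    by (rule measure_mono_fmeasurable[OF _ fmeasurableD[OF Umeas] fmeasurable.Un[OF T0(3) Nmeas]]) (auto simp: U_def)
  also have "\<dots> \<le> measure lebesgue (T0 - N) + measure lebesgue N"
    by (rule measure_Un_le) (use T0(3) Nmeas in auto)
  also have "measure lebesgue N = 0" using N(1) negligible_imp_measure0 by blast
  finally have mU: "measure lebesgue U < d" using mT0 by linarith
  define \<C> where "\<C> = components U"
  have CI: "C = {Inf C<..<Sup C}" "Inf C < Sup C" "a \<le> Inf C" "Sup C \<le> b" if "C \<in> \<C>" for C
    using comp_interval[OF that[unfolded \<C>_def] oU Usub] by auto
  define K where "K C = {Inf C..Sup C}" for C :: "real set"
  have Ksub: "K C \<subseteq> {a..b}" if "C \<in> \<C>" for C using CI[OF that] by (auto simp: K_def)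
  have cntC: "countable \<C>"
    unfolding \<C>_def
  proof (rule countable_disjoint_open_subsets)
    show "open S" if "S \<in> components U" for S using open_components[OF oU that] .
    show "pairwise disjnt (components U)"
      using pairwise_disjoint_components[of U] unfolding pairwise_def disjnt_def by blast
  qed
  define \<D> where "\<D> = (\<lambda>C. f ` K C) ` \<C>"
  have cntD: "countable \<D>" using cntC by (simp add: \<D>_def)
  have cpt: "compact (f ` K C)" if "C \<in> \<C>" for C
    using Ksub[OF that] by (intro compact_continuous_image continuous_on_subset[OF cont]) (auto simp: K_def)
  have Cmeas: "C \<in> lmeasurable" if "C \<in> \<C>" for C
  proof -
    have "{Inf C<..<Sup C} \<in> lmeasurable" unfolding box_real(1)[symmetric] by (rule lmeasurable_box)
    then show ?thesis using CI(1)[OF that] by simp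
  qed
  have measD: "D \<in> lmeasurable" if "D \<in> \<D>" for D
    using that cpt lmeasurable_compact by (auto simp: \<D>_def)
  have subD: "f ` N \<subseteq> \<Union>\<D>"
  proof
    fix y assume "y \<in> f ` N"
    then obtain t where t: "t \<in> N" "y = f t" by blast
    then have "t \<in> U" using NU by blast
    then obtain C where C: "C \<in> \<C>" "t \<in> C" unfolding \<C>_def using Union_components[of U] by blast
    have "t \<in> {Inf C<..<Sup C}" using C(2) CI(1)[OF C(1)] by blast
    then have "t \<in> K C" by (auto simp: K_def)
    then show "y \<in> \<Union>\<D>" using C t by (auto simp: \<D>_def)
  qed
  define p where "p C = (SOME p. p \<in> K C \<and> (\<forall>t\<in>K C. f p \<le> f t))" for C
  define q where "q C = (SOME q. q \<in> K C \<and> (\<forall>t\<in>K C. f t \<le> f q))" for C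
  have pq: "p C \<in> K C \<and> q C \<in> K C \<and> (\<forall>t\<in>K C. f (p C) \<le> f t \<and> f t \<le> f (q C))"
    if C: "C \<in> \<C>" for C
  proof -
    have ne: "K C \<noteq> {}" using CI[OF C] by (auto simp: K_def)
    have cK: "continuous_on (K C) f" using continuous_on_subset[OF cont Ksub[OF C]] .
    have cpK: "compact (K C)" by (simp add: K_def)
    have "\<exists>p. p \<in> K C \<and> (\<forall>t\<in>K C. f p \<le> f t)"
      using continuous_attains_inf[OF cpK ne cK] by blast
    then have P: "p C \<in> K C \<and> (\<forall>t\<in>K C. f (p C) \<le> f t)" unfolding p_def by (rule someI_ex)
    have "\<exists>q. q \<in> K C \<and> (\<forall>t\<in>K C. f t \<le> f q)"
      using continuous_attains_sup[OF cpK ne cK] by blast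
    then have Q: "q C \<in> K C \<and> (\<forall>t\<in>K C. f t \<le> f (q C))" unfolding q_def by (rule someI_ex)
    show ?thesis using P Q by blast
  qed
  have mfK: "measure lebesgue (f ` K C) \<le> \<bar>f (q C) - f (p C)\<bar>" if C: "C \<in> \<C>" for C
  proof -
    have sub: "f ` K C \<subseteq> {f (p C)..f (q C)}" using pq[OF C] by auto
    have le: "f (p C) \<le> f (q C)" using pq[OF C] by auto
    have "measure lebesgue (f ` K C) \<le> measure lebesgue {f (p C)..f (q C)}"
      by (rule measure_mono_fmeasurable[OF sub fmeasurableD[OF lmeasurable_compact[OF cpt[OF C]]]]) (simp add: lmeasurable_compact)
    also have "\<dots> = \<bar>f (q C) - f (p C)\<bar>" using le by simp
    finally show ?thesis .
  qed
  have bound: "measure lebesgue (\<Union>\<D>') \<le> e" if D': "\<D>' \<subseteq> \<D>" "finite \<D>'" for \<D>'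
  proof -
    obtain \<E> where E: "\<E> \<subseteq> \<C>" "finite \<E>" "\<D>' = (\<lambda>C. f ` K C) ` \<E>"
      using finite_subset_image[OF D'(2) D'(1)[unfolded \<D>_def]] by blast
    have "measure lebesgue (\<Union>\<D>') \<le> (\<Sum>C\<in>\<E>. measure lebesgue (f ` K C))"
      unfolding E(3) using E cpt lmeasurable_compact by (intro measure_UNION_le) (auto intro: fmeasurableD)
    also have "\<dots> \<le> (\<Sum>C\<in>\<E>. \<bar>f (q C) - f (p C)\<bar>)"
      using E mfK by (intro sum_mono) auto
    also have "\<dots> < e"
    proof -
      obtain h where h: "bij_betw h {0..<card \<E>} \<E>" using ex_bij_betw_nat_finite[OF E(2)] by blast
      define n where "n = card \<E>"
      have hE: "h i \<in> \<C>" if "i < n" for i using h that E(1) by (auto simp: n_def bij_betw_def)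
      define aa where "aa i = min (p (h i)) (q (h i))" for i
      define bb where "bb i = max (p (h i)) (q (h i))" for i
      have abK: "aa i \<in> K (h i)" "bb i \<in> K (h i)" if "i < n" for i
        using pq[OF hE[OF that]] by (auto simp: aa_def bb_def min_def max_def)
      have c1: "\<forall>i<n. aa i \<le> bb i \<and> {aa i..bb i} \<subseteq> {a..b}"
      proof (intro allI impI conjI)
        fix i assume i: "i < n"
        show "aa i \<le> bb i" by (simp add: aa_def bb_def)
        show "{aa i..bb i} \<subseteq> {a..b}" using abK[OF i] Ksub[OF hE[OF i]] by (auto simp: K_def)
      qed
      have c2: "\<forall>i<n. \<forall>j<n. i \<noteq> j \<longrightarrow> bb i \<le> aa j \<or> bb j \<le> aa i"
      proof (intro allI impI)
        fix i j assume i: "i < n" and j: "j < n" and ij: "i \<noteq> j"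
        have "h i \<noteq> h j" using h i j ij by (auto simp: n_def bij_betw_def inj_on_def)
        then have "h i \<inter> h j = {}" using hE[OF i] hE[OF j] components_nonoverlap unfolding \<C>_def by blast
        then have "{Inf (h i)<..<Sup (h i)} \<inter> {Inf (h j)<..<Sup (h j)} = {}"
          using CI(1)[OF hE[OF i]] CI(1)[OF hE[OF j]] by simp
        then have "Sup (h i) \<le> Inf (h j) \<or> Sup (h j) \<le> Inf (h i)"
          using disj_intervals CI(2)[OF hE[OF i]] CI(2)[OF hE[OF j]] by blast
        then show "bb i \<le> aa j \<or> bb j \<le> aa i"
          using abK[OF i] abK[OF j] by (auto simp: K_def)
      qed
      have "(\<Sum>i<n. bb i - aa i) \<le> (\<Sum>i<n. Sup (h i) - Inf (h i))"
      proof (rule sum_mono)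
        fix i assume "i \<in> {..<n}"
        then have "i < n" by simp
        from abK[OF this] show "bb i - aa i \<le> Sup (h i) - Inf (h i)" by (simp add: K_def)
      qed
      also have "\<dots> = (\<Sum>C\<in>\<E>. Sup C - Inf C)"
        using sum.reindex_bij_betw[OF h, of "\<lambda>C. Sup C - Inf C"] by (simp add: n_def atLeast0LessThan)
      also have "\<dots> = (\<Sum>C\<in>\<E>. measure lebesgue C)"
      proof (rule sum.cong)
        fix C assume "C \<in> \<E>"
        then have C: "C \<in> \<C>" using E by blast
        have "measure lebesgue C = measure lebesgue {Inf C<..<Sup C}" using CI(1)[OF C] by simp
        also have "\<dots> = Sup C - Inf C" using CI(2)[OF C] by simp
        finally show "Sup C - Inf C = measure lebesgue C" by simp
      qed simp
      also have "\<dots> = measure lebesgue (\<Union>\<E>)"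
      proof (rule measure_negligible_finite_Union[symmetric, OF E(2)])
        fix S assume "S \<in> \<E>"
        then have "S \<in> \<C>" using E by blast
        then show "S \<in> lmeasurable" by (rule Cmeas)
      next
        show "pairwise (\<lambda>S T. negligible (S \<inter> T)) \<E>"
        proof (unfold pairwise_def, intro ballI impI)
          fix S T assume "S \<in> \<E>" "T \<in> \<E>" "S \<noteq> T"
          then have "S \<inter> T = {}" using E(1) pairwise_disjoint_components[of U] unfolding \<C>_def pairwise_def by blast
          then show "negligible (S \<inter> T)" by simp
        qed
      qed
      also have "\<dots> \<le> measure lebesgue U"
      proof (rule measure_mono_fmeasurable)
        show "\<Union>\<E> \<subseteq> U" using E(1) in_components_subset unfolding \<C>_def by blast
        show "\<Union>\<E> \<in> sets lebesgue"
          using E Cmeas by (intro sets.finite_Union) (auto intro: fmeasurableD)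
      qed (rule Umeas)
      finally have sumd: "(\<Sum>i<n. bb i - aa i) < d" using mU by linarith
      have "(\<Sum>i<n. \<bar>f (bb i) - f (aa i)\<bar>) < e" using H c1 c2 sumd by blast
      moreover have "(\<Sum>i<n. \<bar>f (bb i) - f (aa i)\<bar>) = (\<Sum>i<n. \<bar>f (q (h i)) - f (p (h i))\<bar>)"
        by (intro sum.cong) (auto simp: aa_def bb_def min_def max_def abs_minus_commute)
      moreover have "(\<Sum>i<n. \<bar>f (q (h i)) - f (p (h i))\<bar>) = (\<Sum>C\<in>\<E>. \<bar>f (q C) - f (p C)\<bar>)"
        using sum.reindex_bij_betw[OF h, of "\<lambda>C. \<bar>f (q C) - f (p C)\<bar>"] by (simp add: n_def atLeast0LessThan)
      ultimately show ?thesis by simp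
    qed
    finally show ?thesis by simp
  qed
  have "\<Union>\<D> \<in> lmeasurable" "measure lebesgue (\<Union>\<D>) \<le> e"
    using fmeasurable_Union_bound[OF cntD measD bound] measure_Union_bound[OF cntD measD bound] by auto
  then show "\<exists>T. f ` N \<subseteq> T \<and> T \<in> lmeasurable \<and> measure lebesgue T \<le> e" using subD by blast
qed

lemma lusin:
  assumes ac: "abs_cont_on {a..b} f" and N: "negligible N" "N \<subseteq> {a..b}"
  shows "negligible (f ` N)"
proof -
  have "negligible (f ` (N \<inter> {a<..<b}))"
    by (rule lusin_open[OF ac]) (auto intro: negligible_subset[OF N(1)])
  moreover have "f ` N \<subseteq> f ` (N \<inter> {a<..<b}) \<union> {f a, f b}"
  proof
    fix y assume "y \<in> f ` N"
    then obtain t where t: "t \<in> N" "y = f t" by blast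
    then have "t = a \<or> t = b \<or> t \<in> {a<..<b}" using N(2) by force
    then show "y \<in> f ` (N \<inter> {a<..<b}) \<union> {f a, f b}" using t by blast
  qed
  ultimately show ?thesis by (meson negligible_Un negligible_insert negligible_empty negligible_subset)
qed




lemma mono_lemma:
  fixes f :: "real \<Rightarrow> real"
  assumes ab: "a \<le> b" and ac: "abs_cont_on {a..b} f" and N: "negligible N"
    and fa: "f a \<le> c" and cd: "c < d"
    and D: "\<And>t. a < t \<Longrightarrow> t < b \<Longrightarrow> t \<notin> N \<Longrightarrow>
              \<exists>D. (f has_real_derivative D) (at t) \<and> (c < f t \<longrightarrow> f t < d \<longrightarrow> D < 0)"
  shows "f b \<le> c"
proof (rule ccontr)
  assume "\<not> f b \<le> c"
  then have fb: "c < f b" by simp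
  have cont: "continuous_on {a..b} f" using ac_cont[OF ac] .
  have negf: "negligible (f ` (N \<inter> {a..b}))"
    by (rule lusin[OF ac]) (auto intro: negligible_subset[OF N])
  define m where "m = min (f b) d"
  have cm: "c < m" using fb cd by (simp add: m_def)
  have "\<not> {c<..<m} \<subseteq> f ` (N \<inter> {a..b})"
  proof
    assume "{c<..<m} \<subseteq> f ` (N \<inter> {a..b})"
    then have "negligible {c<..<m}" using negf negligible_subset by blast
    then have "box c m = {}" using negligible_interval(2)[of c m] by (simp add: box_real(1))
    then show False using cm by (simp add: box_real(1))
  qed
  then have "\<exists>y. c < y \<and> y < m \<and> y \<notin> f ` (N \<inter> {a..b})" by (meson greaterThanLessThan_iff subsetI)
  then obtain y where y: "c < y" "y < m" "y \<notin> f ` (N \<inter> {a..b})" by blast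
  define S where "S = {a..b} \<inter> f -` {..y}"
  have clS: "closed S" unfolding S_def by (rule continuous_closed_preimage[OF cont]) auto
  have aS: "a \<in> S" using fa y ab by (auto simp: S_def)
  have bdS: "bdd_above S" by (auto simp: S_def intro!: bdd_aboveI[of _ b])
  define t0 where "t0 = Sup S"
  have t0S: "t0 \<in> S" unfolding t0_def using closed_contains_Sup[OF _ bdS clS] aS by blast
  have t0ab: "a \<le> t0" "t0 \<le> b" "f t0 \<le> y" using t0S by (auto simp: S_def)
  have above: "y < f t" if "t0 < t" "t \<le> b" for t
  proof (rule ccontr)
    assume "\<not> y < f t"
    then have "t \<in> S" using that t0ab by (auto simp: S_def)
    then have "t \<le> t0" unfolding t0_def using bdS by (rule cSup_upper)
    then show False using that by simp
  qed
  have "f b > y" using y by (simp add: m_def)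
  then have t0b: "t0 < b" using t0ab by (metis order.not_eq_order_implies_strict not_less)
  have ft0: "f t0 = y"
  proof (rule ccontr)
    assume "f t0 \<noteq> y"
    then have lt: "f t0 < y" using t0ab by simp
    have "t0 \<in> {a..b}" using t0ab by simp
    then obtain \<delta> where \<delta>: "\<delta> > 0" "\<And>t. t \<in> {a..b} \<Longrightarrow> dist t t0 < \<delta> \<Longrightarrow> dist (f t) (f t0) < y - f t0"
      using cont lt unfolding continuous_on_iff by (metis diff_gt_0_iff_gt)
    define t where "t = min b (t0 + \<delta>/2)"
    have "t \<in> {a..b}" "dist t t0 < \<delta>" "t0 < t" "t \<le> b" using t0ab t0b \<delta>(1) by (auto simp: t_def dist_real_def)
    then have "dist (f t) (f t0) < y - f t0" "y < f t" using \<delta>(2) above by auto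
    then show False by (simp add: dist_real_def)
  qed
  have t0a: "a < t0" using t0ab ft0 fa y by (metis order.not_eq_order_implies_strict not_less)
  have t0N: "t0 \<notin> N" using y(3) ft0 t0ab by auto
  obtain D' where D': "(f has_real_derivative D') (at t0)" "c < f t0 \<longrightarrow> f t0 < d \<longrightarrow> D' < 0"
    using D[OF t0a t0b t0N] by blast
  have "D' < 0" using D'(2) ft0 y cd by (simp add: m_def)
  then obtain e where e: "e > 0" "\<And>h. h > 0 \<Longrightarrow> h < e \<Longrightarrow> f t0 > f (t0 + h)"
    using DERIV_neg_dec_right[OF D'(1)] by blast
  define h where "h = min (e/2) (b - t0)"
  have "h > 0" "h < e" using e t0b by (auto simp: h_def)
  then have "f (t0 + h) < y" using e(2) ft0 by auto
  moreover have "y < f (t0 + h)" using \<open>h > 0\<close> by (intro above) (auto simp: h_def)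
  ultimately show False by simp
qed

lemma ac_diff: assumes "abs_cont_on S f" "abs_cont_on S g" shows "abs_cont_on S (\<lambda>t. f t - g t)"
proof (rule ac_comb[OF assms, of 1 1])
  fix s t show "\<bar>(f t - g t) - (f s - g s)\<bar> \<le> 1 * \<bar>f t - f s\<bar> + 1 * \<bar>g t - g s\<bar>" by (simp add: abs_diff_le_iff abs_le_iff) linarith
qed auto

lemma ac_neg: assumes "abs_cont_on S f" shows "abs_cont_on S (\<lambda>t. - f t)"
  using ac_diff[OF ac_const[of S 0] assms] by simp

lemma mono_lemma_up:
  fixes f :: "real \<Rightarrow> real"
  assumes ab: "a \<le> b" and ac: "abs_cont_on {a..b} f" and N: "negligible N"
    and fa: "c \<le> f a" and cd: "d < c"
    and D: "\<And>t. a < t \<Longrightarrow> t < b \<Longrightarrow> t \<notin> N \<Longrightarrow>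
              \<exists>D. (f has_real_derivative D) (at t) \<and> (d < f t \<longrightarrow> f t < c \<longrightarrow> D > 0)"
  shows "c \<le> f b"
proof -
  have "(\<lambda>t. - f t) b \<le> - c"
  proof (rule mono_lemma[OF ab ac_neg[OF ac] N, of "-c" "-d"])
    fix t assume t: "a < t" "t < b" "t \<notin> N"
    obtain D where "(f has_real_derivative D) (at t)" "d < f t \<longrightarrow> f t < c \<longrightarrow> D > 0" using D[OF t] by blast
    then show "\<exists>D. ((\<lambda>t. - f t) has_real_derivative D) (at t) \<and> (- c < - f t \<longrightarrow> - f t < - d \<longrightarrow> D < 0)"
      by (intro exI[of _ "-D"]) (auto intro: DERIV_minus)
  qed (use fa cd in auto)
  then show ?thesis by simp
qed



lemma basics: fixes e x y z x' y' z' :: real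
  assumes "0<e" "e\<le>1/100" "x\<ge>0" "y\<ge>0" "z\<ge>0" "\<bar>x'\<bar> \<le> e*(x+y+z)" "z' - z \<ge> -e*(x+y)"
  shows "- (e*x') \<le> e*(e*x)+e*(e*y)+e*(e*z)" "e*x' \<le> e*(e*x)+e*(e*y)+e*(e*z)"
   "x' \<le> e*x+e*y+e*z" "-x' \<le> e*x+e*y+e*z" "z' \<ge> z - e*x - e*y" "e*z' \<ge> e*z - e*(e*x) - e*(e*y)"
   "e*(e*x) \<le> (1/100)*(e*x)" "e*(e*y) \<le> (1/100)*(e*y)" "e*(e*z) \<le> (1/100)*(e*z)"
   "e*x \<le> (1/100)*x" "e*y \<le> (1/100)*y" "e*z \<le> (1/100)*z" "e*x\<ge>0" "e*y\<ge>0" "e*z\<ge>0"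
proof -
  have a: "- x' \<le> e*x+e*y+e*z" using assms(6) by (simp add: algebra_simps)
  have b: "e*(-x') \<le> e*(e*x+e*y+e*z)" using a assms(1) by (intro mult_left_mono) auto
  thus "-(e*x') \<le> e*(e*x)+e*(e*y)+e*(e*z)" by (simp add: algebra_simps)
  have a2: "x' \<le> e*x+e*y+e*z" using assms(6) by (simp add: algebra_simps)
  have b: "e*(x') \<le> e*(e*x+e*y+e*z)" using a2 assms(1) by (intro mult_left_mono) auto
  thus "(e*x') \<le> e*(e*x)+e*(e*y)+e*(e*z)" by (simp add: algebra_simps)
  show "x' \<le> e*x+e*y+e*z" "-x' \<le> e*x+e*y+e*z" using a a2 by auto
  show "z' \<ge> z - e*x - e*y" using assms(7) by (simp add: algebra_simps)
  have c: "e*(z') \<ge> e*(z - e*x-e*y)" using assms(7,1) by (intro mult_left_mono) (auto simp: algebra_simps)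
  thus "e*z' \<ge> e*z - e*(e*x) - e*(e*y)" by (simp add: algebra_simps)
  show "e*(e*x) \<le> (1/100)*(e*x)" using assms mult_right_mono[of e "1/100" "e*x"] by auto
  show "e*(e*y) \<le> (1/100)*(e*y)" using assms mult_right_mono[of e "1/100" "e*y"] by auto
  show "e*(e*z) \<le> (1/100)*(e*z)" using assms mult_right_mono[of e "1/100" "e*z"] by auto
  show "e*y \<le> (1/100)*y" using assms mult_right_mono[of e "1/100" "y"] by auto
  show "e*x \<le> (1/100)*x" using assms mult_right_mono[of e "1/100" "x"] by auto
  show "e*z \<le> (1/100)*z" using assms mult_right_mono[of e "1/100" "z"] by auto
  show "e*x\<ge>0" "e*y\<ge>0" "e*z\<ge>0" using assms by auto
qed

lemma ybound: fixes e x y z :: real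
  assumes "0<e" "y \<le> 2*e*(x+z)" shows "e*y \<le> 2*(e*(e*x)) + 2*(e*(e*z))"
proof -
  have "e*y \<le> e*(2*e*(x+z))" using assms by (intro mult_left_mono) auto
  thus ?thesis by (simp add: algebra_simps)
qed

lemma P2: fixes e x y z x' y' z' :: real
  assumes "0<e" "e\<le>1/100" "x\<ge>0" "y\<ge>0" "z\<ge>0" "\<bar>x'\<bar> \<le> e*(x+y+z)" "z' - z \<ge> -e*(x+y)"
   "y \<le> 2*e*(x+z)" "z - 8*e*x > 0"
  shows "z' - 8*e*x' > 0"
proof -
  note B = basics[OF assms(1-7)]
  note Y = ybound[OF assms(1,8)]
  have "z > 8*(e*x)" using assms(9) by (simp add: algebra_simps)
  hence "z' - 8*(e*x') > 0" using B Y by linarith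
  thus ?thesis by (simp add: algebra_simps)
qed

lemma P3: fixes e x y z x' y' z' :: real
  assumes "0<e" "e\<le>1/100" "x\<ge>0" "y\<ge>0" "z\<ge>0" "\<bar>x'\<bar> \<le> e*(x+y+z)" "z' - z \<ge> -e*(x+y)"
   "y \<le> 2*e*(x+z)" "z - 8*e*x > 0"
  shows "z' > 3/4 * z"
proof -
  note B = basics[OF assms(1-7)]
  note Y = ybound[OF assms(1,8)]
  have "z > 8*(e*x)" using assms(9) by (simp add: algebra_simps)
  thus ?thesis using B Y by linarith
qed

lemma P4: fixes e x y z x' y' z' :: real
  assumes "0<e" "e\<le>1/100" "x\<ge>0" "y\<ge>0" "z\<ge>0" "\<bar>x'\<bar> \<le> e*(x+y+z)" "z' - z \<ge> -e*(x+y)"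
   "y \<le> 2*e*(x+z)" "x - 8*e*z > 0"
  shows "(x' - 8*e*z') - 3*e*(x - 8*e*z) < 0"
proof -
  note B = basics[OF assms(1-7)]
  note Y = ybound[OF assms(1,8)]
  have "x > 8*(e*z)" using assms(9) by (simp add: algebra_simps)
  hence "x > 0" using B by linarith
  hence "e*x > 0" using assms by simp
  hence "(x' - 8*(e*z')) - 3*(e*x) + 24*(e*(e*z)) < 0" using B Y by linarith
  thus ?thesis by (simp add: algebra_simps)
qed
lemma P1: fixes e x y z x' y' z' :: real
  assumes "0<e" "e\<le>1/100" "x\<ge>0" "y\<ge>0" "z\<ge>0" "\<bar>x'\<bar> \<le> e*(x+y+z)" "y'+y \<le> e*(x+z)" "z' - z \<ge> -e*(x+y)"
   "y - 2*e*(x+z) > 0"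
  shows "y' - 2*e*x' - 2*e*z' < 0"
proof -
  have a: "- x' \<le> e*x+e*y+e*z" using assms(6) by (simp add: algebra_simps)
  have b: "e*(-x') \<le> e*(e*x+e*y+e*z)" using a assms(1) by (intro mult_left_mono) auto
  hence b: "-(e*x') \<le> e*(e*x)+e*(e*y)+e*(e*z)" by (simp add: algebra_simps)
  have c: "e*(-z') \<le> e*(e*x+e*y - z)" using assms(8,1) by (intro mult_left_mono) (auto simp: algebra_simps)
  hence c: "-(e*z') \<le> e*(e*x)+e*(e*y) - e*z" by (simp add: algebra_simps)
  have d: "y'+y \<le> e*x+e*z" using assms(7) by (simp add: algebra_simps)
  have f: "y > 2*(e*x)+2*(e*z)" using assms(9) by (simp add: algebra_simps)
  have g1: "e*(e*x) \<le> (1/100)*(e*x)" using assms mult_right_mono[of e "1/100" "e*x"] by auto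
  have g2: "e*(e*y) \<le> (1/100)*(e*y)" using assms mult_right_mono[of e "1/100" "e*y"] by auto
  have g3: "e*(e*z) \<le> (1/100)*(e*z)" using assms mult_right_mono[of e "1/100" "e*z"] by auto
  have g4: "e*y \<le> (1/100)*y" using assms mult_right_mono[of e "1/100" "y"] by auto
  have pos: "e*x \<ge> 0" "e*z\<ge>0" "e*y \<ge> 0" using assms by auto
  have "y' - 2*(e*x') - 2*(e*z') < 0" using b c d f g1 g2 g3 g4 pos by linarith
  thus ?thesis by (simp add: algebra_simps)
qed



lemma exp_deriv: "((\<lambda>r. exp (k * r)) has_real_derivative exp (k * t) * k) (at t)"
  by (auto intro!: derivative_eq_intros)

lemma main_B1:
  fixes x y z :: "real \<Rightarrow> real" and \<epsilon> :: real
  assumes acx: "abs_cont_nonpos x" and acy: "abs_cont_nonpos y" and acz: "abs_cont_nonpos z"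
    and pos: "\<forall>s\<le>0. x s \<ge> 0 \<and> y s \<ge> 0 \<and> z s \<ge> 0"
    and lim: "Liminf at_bot (\<lambda>s. ereal (y s)) = 0"
    and ep: "\<epsilon> > 0"
    and AE: "AE s in lborel. s \<le> 0 \<longrightarrow>
          (\<exists>x' y' z'. (x has_real_derivative x') (at s) \<and>
                      (y has_real_derivative y') (at s) \<and>
                      (z has_real_derivative z') (at s) \<and>
                      \<bar>x'\<bar> \<le> \<epsilon> * (x s + y s + z s) \<and>
                      y' + y s \<le> \<epsilon> * (x s + z s) \<and>
                      z' - z s \<ge> - \<epsilon> * (x s + y s))"
    and epl: "\<epsilon> \<le> 1/100"
  shows "(\<forall>s\<le>0. y s \<le> 2 * \<epsilon> * (x s + z s))
         \<and> ((\<exists>s_star\<le>0. \<forall>s\<le>s_star. z s \<le> 8 * \<epsilon> * x s)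
            \<or> (\<forall>s\<le>0. x s \<le> 8 * \<epsilon> * z s))"
proof -
  define G where "G s \<longleftrightarrow> (\<exists>x' y' z'. (x has_real_derivative x') (at s) \<and>
                      (y has_real_derivative y') (at s) \<and>
                      (z has_real_derivative z') (at s) \<and>
                      \<bar>x'\<bar> \<le> \<epsilon> * (x s + y s + z s) \<and>
                      y' + y s \<le> \<epsilon> * (x s + z s) \<and>
                      z' - z s \<ge> - \<epsilon> * (x s + y s))" for s
  have AEG: "AE s in lborel. s \<le> 0 \<longrightarrow> G s" using AE unfolding G_def .
  obtain N0 where sub: "{t \<in> space lborel. \<not> (t \<le> 0 \<longrightarrow> G t)} \<subseteq> N0"
    and N0m: "emeasure lborel N0 = 0" "N0 \<in> sets lborel" by (rule AE_E[OF AEG])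
  have nul: "N0 \<in> null_sets lborel" using N0m by (rule null_setsI)
  have good: "G t" if tt: "t \<le> 0" "t \<notin> N0" for t
  proof (rule ccontr)
    assume "\<not> G t"
    then have "t \<in> {t \<in> space lborel. \<not> (t \<le> 0 \<longrightarrow> G t)}" using tt by simp
    then show False using sub tt by blast
  qed
  have negN: "negligible N0" using nul by (simp add: negligible_iff_null_sets null_sets_completionI)
  have acI: "abs_cont_on {a..b} f" if "abs_cont_nonpos f" "a \<le> b" "b \<le> 0" for f a b
    using that by (simp add: abs_cont_nonpos_def)
  have gd: "\<exists>x' y' z'. (x has_real_derivative x') (at t) \<and>
                      (y has_real_derivative y') (at t) \<and>
                      (z has_real_derivative z') (at t) \<and>
                      \<bar>x'\<bar> \<le> \<epsilon> * (x t + y t + z t) \<and>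
                      y' + y t \<le> \<epsilon> * (x t + z t) \<and>
                      z' - z t \<ge> - \<epsilon> * (x t + y t)" if "t \<le> 0" "t \<notin> N0" for t
    using good[OF that] unfolding G_def .
  have c1: "y s \<le> 2 * \<epsilon> * (x s + z s)" if s: "s \<le> 0" for s
  proof (rule ccontr)
    define w where "w t = y t - 2*\<epsilon>*x t - 2*\<epsilon>*z t" for t
    assume "\<not> y s \<le> 2 * \<epsilon> * (x s + z s)"
    then have ws: "w s > 0" by (simp add: w_def algebra_simps)
    have wle: "w s \<le> w r" if r: "r \<le> s" for r
    proof (rule ccontr)
      assume "\<not> w s \<le> w r"
      then have lt: "w r < w s" by simp
      have "w s \<le> max (w r) 0"
      proof (rule mono_lemma[of r s w N0 "max (w r) 0" "w s + 1"])
        show "r \<le> s" using r .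
        show "abs_cont_on {r..s} w" unfolding w_def
          by (intro ac_diff ac_scale acI[OF acx] acI[OF acy] acI[OF acz] r s)
        show "negligible N0" by (rule negN)
        show "w r \<le> max (w r) 0" by simp
        show "max (w r) 0 < w s + 1" using lt ws by simp
        fix t assume t: "r < t" "t < s" "t \<notin> N0"
        then have t0: "t \<le> 0" using s by simp
        obtain x' y' z' where dx: "(x has_real_derivative x') (at t)"
          and dy: "(y has_real_derivative y') (at t)" and dz: "(z has_real_derivative z') (at t)"
          and i1: "\<bar>x'\<bar> \<le> \<epsilon> * (x t + y t + z t)" and i2: "y' + y t \<le> \<epsilon> * (x t + z t)"
          and i3: "z' - z t \<ge> - \<epsilon> * (x t + y t)"
          using gd[OF t0 t(3)] by blast
        have D: "(w has_real_derivative (y' - 2*\<epsilon>*x' - 2*\<epsilon>*z')) (at t)"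
          unfolding w_def by (intro DERIV_diff DERIV_cmult dx dy dz)
        show "\<exists>D. (w has_real_derivative D) (at t) \<and> (max (w r) 0 < w t \<longrightarrow> w t < w s + 1 \<longrightarrow> D < 0)"
        proof (intro exI[of _ "y' - 2*\<epsilon>*x' - 2*\<epsilon>*z'"] conjI impI D)
          assume "max (w r) 0 < w t"
          then have "y t - 2*\<epsilon>*(x t + z t) > 0" by (simp add: w_def algebra_simps)
          then show "y' - 2*\<epsilon>*x' - 2*\<epsilon>*z' < 0"
            using P1[OF ep epl _ _ _ i1 i2 i3] pos t0 by auto
        qed
      qed
      then show False using lt ws by simp
    qed
    have ev: "eventually (\<lambda>r. ereal (w s) \<le> ereal (y r)) at_bot"
      unfolding eventually_at_bot_linorder
    proof (intro exI allI impI)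
      fix r assume rs: "r \<le> s"
      then have "w s \<le> w r" "r \<le> 0" using wle s by auto
      moreover have "2*\<epsilon>*x r \<ge> 0" "2*\<epsilon>*z r \<ge> 0" using pos \<open>r \<le> 0\<close> ep by auto
      ultimately show "ereal (w s) \<le> ereal (y r)" by (simp add: w_def)
    qed
    have "ereal (w s) \<le> Liminf at_bot (\<lambda>r. ereal (y r))" by (rule Liminf_bounded[OF ev])
    then show False using lim ws by simp
  qed
  define u where "u t = z t - 8*\<epsilon>*x t" for t
  have part2: "(\<exists>s_star\<le>0. \<forall>s\<le>s_star. z s \<le> 8 * \<epsilon> * x s) \<or> (\<forall>s\<le>0. x s \<le> 8 * \<epsilon> * z s)"
  proof (cases "\<exists>s_star\<le>0. \<forall>s\<le>s_star. u s \<le> 0")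
    case True
    then show ?thesis by (auto simp: u_def)
  next
    case False
    then have ex: "\<forall>s_star\<le>0. \<exists>s\<le>s_star. u s > 0" by (meson not_le)
    have upos: "u t > 0" if t: "t \<le> 0" for t
    proof -
      obtain s where s: "s \<le> t" "u s > 0" using ex t by blast
      have "u s \<le> u t"
      proof (rule mono_lemma_up[of s t u N0 "u s" 0])
        show "abs_cont_on {s..t} u" unfolding u_def
          by (intro ac_diff ac_scale acI[OF acx] acI[OF acz] s t)
        fix r assume r: "s < r" "r < t" "r \<notin> N0"
        then have r0: "r \<le> 0" using t by simp
        obtain x' y' z' where dx: "(x has_real_derivative x') (at r)"
          and dy: "(y has_real_derivative y') (at r)" and dz: "(z has_real_derivative z') (at r)"
          and i1: "\<bar>x'\<bar> \<le> \<epsilon> * (x r + y r + z r)" and i2: "y' + y r \<le> \<epsilon> * (x r + z r)"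
          and i3: "z' - z r \<ge> - \<epsilon> * (x r + y r)"
          using gd[OF r0 r(3)] by blast
        have D: "(u has_real_derivative (z' - 8*\<epsilon>*x')) (at r)"
          unfolding u_def by (intro DERIV_diff DERIV_cmult dx dz)
        show "\<exists>D. (u has_real_derivative D) (at r) \<and> (0 < u r \<longrightarrow> u r < u s \<longrightarrow> D > 0)"
        proof (intro exI[of _ "z' - 8*\<epsilon>*x'"] conjI impI D)
          assume "0 < u r"
          then have "z r - 8*\<epsilon>*x r > 0" by (simp add: u_def)
          then show "z' - 8*\<epsilon>*x' > 0"
            using P2[OF ep epl _ _ _ i1 i3 c1[OF r0]] pos r0 by auto
        qed
      qed (use s negN in auto)
      then show ?thesis using s by simp
    qed
    have "\<forall>t\<le>0. x t \<le> 8 * \<epsilon> * z t"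
    proof (intro allI impI, rule ccontr)
      fix t assume t: "t \<le> 0" and "\<not> x t \<le> 8 * \<epsilon> * z t"
      then have vt: "x t - 8*\<epsilon>*z t > 0" by simp
      define k1 :: real where "k1 = -(3/4)"
      define k2 :: real where "k2 = -3*\<epsilon>"
      define g where "g r = z r * exp (k1 * r)" for r
      define \<psi> where "\<psi> r = (x r - 8*\<epsilon>*z r) * exp (k2 * r)" for r
      have gle: "g s \<le> g t" if st: "s \<le> t" for s
      proof (rule mono_lemma_up[of s t g N0 "g s" "g s - 1"])
        show "abs_cont_on {s..t} g" unfolding g_def
          by (intro ac_mult ac_exp acI[OF acz] st t)
        fix r assume r: "s < r" "r < t" "r \<notin> N0"
        then have r0: "r \<le> 0" using t by simp
        obtain x' y' z' where dx: "(x has_real_derivative x') (at r)"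
          and dy: "(y has_real_derivative y') (at r)" and dz: "(z has_real_derivative z') (at r)"
          and i1: "\<bar>x'\<bar> \<le> \<epsilon> * (x r + y r + z r)" and i2: "y' + y r \<le> \<epsilon> * (x r + z r)"
          and i3: "z' - z r \<ge> - \<epsilon> * (x r + y r)"
          using gd[OF r0 r(3)] by blast
        have D: "(g has_real_derivative (z' * exp (k1 * r) + exp (k1 * r) * k1 * z r)) (at r)"
          unfolding g_def by (rule DERIV_mult[OF dz exp_deriv])
        have "z r - 8*\<epsilon>*x r > 0" using upos[OF r0] by (simp add: u_def)
        then have zz: "z' > 3/4 * z r" using P3[OF ep epl _ _ _ i1 i3 c1[OF r0]] pos r0 by auto
        have "z' * exp (k1 * r) + exp (k1 * r) * k1 * z r = exp (k1 * r) * (z' - 3/4 * z r)"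
          by (simp add: k1_def algebra_simps)
        also have "\<dots> > 0" using zz by simp
        finally have Dp: "z' * exp (k1 * r) + exp (k1 * r) * k1 * z r > 0" .
        show "\<exists>D. (g has_real_derivative D) (at r) \<and> (g s - 1 < g r \<longrightarrow> g r < g s \<longrightarrow> D > 0)"
          using D Dp by blast
      qed (use st negN in auto)
      have \<psi>t: "\<psi> t > 0" using vt by (simp add: \<psi>_def)
      have \<psi>ge: "\<psi> t \<le> \<psi> s" if st: "s \<le> t" for s
      proof (rule ccontr)
        assume "\<not> \<psi> t \<le> \<psi> s"
        then have lt: "\<psi> s < \<psi> t" by simp
        have "\<psi> t \<le> max (\<psi> s) 0"
        proof (rule mono_lemma[of s t \<psi> N0 "max (\<psi> s) 0" "\<psi> t + 1"])
          show "abs_cont_on {s..t} \<psi>" unfolding \<psi>_def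
            by (intro ac_mult ac_exp ac_diff ac_scale acI[OF acx] acI[OF acz] st t)
          fix r assume r: "s < r" "r < t" "r \<notin> N0"
          then have r0: "r \<le> 0" using t by simp
          obtain x' y' z' where dx: "(x has_real_derivative x') (at r)"
            and dy: "(y has_real_derivative y') (at r)" and dz: "(z has_real_derivative z') (at r)"
            and i1: "\<bar>x'\<bar> \<le> \<epsilon> * (x r + y r + z r)" and i2: "y' + y r \<le> \<epsilon> * (x r + z r)"
            and i3: "z' - z r \<ge> - \<epsilon> * (x r + y r)"
            using gd[OF r0 r(3)] by blast
          have D: "(\<psi> has_real_derivative ((x' - 8*\<epsilon>*z') * exp (k2 * r) + exp (k2 * r) * k2 * (x r - 8*\<epsilon>*z r))) (at r)"
            unfolding \<psi>_def by (intro DERIV_mult DERIV_diff DERIV_cmult dx dz exp_deriv)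
          show "\<exists>D. (\<psi> has_real_derivative D) (at r) \<and> (max (\<psi> s) 0 < \<psi> r \<longrightarrow> \<psi> r < \<psi> t + 1 \<longrightarrow> D < 0)"
          proof (intro exI conjI impI, rule D)
            assume "max (\<psi> s) 0 < \<psi> r"
            then have "\<psi> r > 0" by simp
            then have "x r - 8*\<epsilon>*z r > 0" by (simp add: \<psi>_def zero_less_mult_iff)
            then have q: "(x' - 8*\<epsilon>*z') - 3*\<epsilon>*(x r - 8*\<epsilon>*z r) < 0"
              using P4[OF ep epl _ _ _ i1 i3 c1[OF r0]] pos r0 by auto
            have "(x' - 8*\<epsilon>*z') * exp (k2 * r) + exp (k2 * r) * k2 * (x r - 8*\<epsilon>*z r)
                = exp (k2 * r) * ((x' - 8*\<epsilon>*z') - 3*\<epsilon>*(x r - 8*\<epsilon>*z r))"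
              by (simp add: k2_def algebra_simps)
            also have "\<dots> < 0" using q by (simp add: mult_pos_neg)
            finally show "(x' - 8*\<epsilon>*z') * exp (k2 * r) + exp (k2 * r) * k2 * (x r - 8*\<epsilon>*z r) < 0" .
          qed
        qed (use st negN lt \<psi>t in auto)
        then show False using lt \<psi>t by simp
      qed
      have zt: "z t > 0" using upos[OF t] pos t ep by (simp add: u_def) (smt (verit) mult_nonneg_nonneg)
      define \<Psi> where "\<Psi> = \<psi> t"
      define Gt where "Gt = g t"
      have Gt: "Gt > 0" using zt by (simp add: Gt_def g_def)
      define K where "K = 8*\<epsilon>*\<Psi>/Gt"
      have K: "K > 0" using ep \<psi>t Gt by (simp add: K_def \<Psi>_def)
      define \<alpha> :: real where "\<alpha> = 3/4 - 3*\<epsilon>"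
      have \<alpha>: "\<alpha> > 0" using epl by (simp add: \<alpha>_def)
      define s where "s = min t (ln K / \<alpha>)"
      have st: "s \<le> t" and s0: "s \<le> 0" using t by (auto simp: s_def)
      have "\<alpha> * s \<le> \<alpha> * (ln K / \<alpha>)" using \<alpha> by (intro mult_left_mono) (auto simp: s_def)
      then have "\<alpha> * s \<le> ln K" using \<alpha> by simp
      then have eK: "exp (\<alpha> * s) \<le> K" using K by (metis exp_le_cancel_iff exp_ln)
      have e1: "exp (k2 * s) = exp (k1 * s) * exp (\<alpha> * s)"
        by (simp add: k1_def k2_def \<alpha>_def exp_add[symmetric] algebra_simps)
      have ps: "\<Psi> \<le> (x s - 8*\<epsilon>*z s) * exp (k2 * s)" using \<psi>ge[OF st] by (simp add: \<Psi>_def \<psi>_def)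
      have "8*\<epsilon>*z s * exp (k2 * s) \<ge> 0" using pos s0 ep by simp
      then have ps2: "\<Psi> \<le> x s * exp (k2 * s)" using ps by (simp add: algebra_simps)
      have gs: "z s * exp (k1 * s) \<le> Gt" using gle[OF st] by (simp add: Gt_def g_def)
      have us: "8*\<epsilon>*x s < z s" using upos[OF s0] by (simp add: u_def)
      have "8*\<epsilon>*\<Psi> \<le> 8*\<epsilon>*(x s * exp (k2 * s))" using ps2 ep by simp
      also have "\<dots> = (8*\<epsilon>*x s) * exp (k2 * s)" by simp
      also have "\<dots> < z s * exp (k2 * s)" using us by simp
      also have "\<dots> = (z s * exp (k1 * s)) * exp (\<alpha> * s)" using e1 by simp
      also have "\<dots> \<le> Gt * K" using gs eK Gt by (intro mult_mono) auto
      also have "\<dots> = 8*\<epsilon>*\<Psi>" using Gt by (simp add: K_def)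
      finally show False by simp
    qed
    then show ?thesis by blast
  qed
  show ?thesis using c1 part2 by blast
qed


theorem lemmaB1:
  shows "\<exists>\<epsilon>0>0. \<exists>c>0. \<forall>(x::real \<Rightarrow> real) (y::real \<Rightarrow> real) (z::real \<Rightarrow> real) (\<epsilon>::real).
     ( abs_cont_nonpos x \<and> abs_cont_nonpos y \<and> abs_cont_nonpos z
     \<and> (\<forall>s\<le>0. x s \<ge> 0 \<and> y s \<ge> 0 \<and> z s \<ge> 0)
     \<and> (\<forall>s\<le>0. x s + y s + z s > 0)
     \<and> Liminf at_bot (\<lambda>s. ereal (y s)) = 0
     \<and> \<epsilon> > 0
     \<and> (AE s in lborel. s \<le> 0 \<longrightarrow>
          (\<exists>x' y' z'. (x has_real_derivative x') (at s) \<and>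
                      (y has_real_derivative y') (at s) \<and>
                      (z has_real_derivative z') (at s) \<and>
                      \<bar>x'\<bar> \<le> \<epsilon> * (x s + y s + z s) \<and>
                      y' + y s \<le> \<epsilon> * (x s + z s) \<and>
                      z' - z s \<ge> - \<epsilon> * (x s + y s)))
     \<and> \<epsilon> \<le> \<epsilon>0 )
     \<longrightarrow> (\<forall>s\<le>0. y s \<le> 2 * \<epsilon> * (x s + z s))
         \<and> ((\<exists>s_star\<le>0. \<forall>s\<le>s_star. z s \<le> 8 * \<epsilon> * x s)
            \<or> (\<forall>s\<le>0. x s \<le> c * \<epsilon> * z s))"
  apply (rule exI[of _ "1/100::real"])
  apply (rule conjI, simp)
  apply (rule exI[of _ "8::real"])
  apply (rule conjI, simp)
  apply (intro allI impI)
  apply (elim conjE)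
  apply (rule main_B1; assumption)
  done

end
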